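(* Let $T\in(0,\infty]$ and let $K(T),M(T)\in\Im_T$. If $M(T)\approx K(T)$, then for every Banach function space $\widetilde{X}(0,T)$, $$K(T)\mapsto\widetilde{X}(0,T)\iff M(T)\mapsto\widetilde{X}(0,T).$$
   Context: $\Im_T$ is the collection of cones $K(T)$ of nonnegative measurable functions on $(0,T)$ equipped with functionals $\rho_{K(T)}:K(T)\to[0,\infty)$ such that $h\in K(T),\alpha\ge0$ implies $\alpha h\in K(T)$ and $\rho_{K(T)}(\alpha h)=\alpha\rho_{K(T)}(h)$, and $\rho_{K(T)}(h)=0$ implies $h=0$ a.e. on $(0,T)$. Covering: $M(T)\prec K(T)$ if there exist $C_0=C_0(T)>0$ and $C_1=C_1(T)\in[0,\infty)$ with $C_1(\infty)=0$ such that for each $h_1\in M(T)$ there is $h_2\in K(T)$ with $\rho_{K(T)}(h_2)\le C_0\rho_{M(T)}(h_1)$ and $h_1(t)\le h_2(t)+C_1\rho_{M(T)}(h_1)$ for $t\in(0,T)$. $M(T)\approx K(T)$ means $M(T)\prec K(T)$ and $K(T)\prec M(T)$. Embedding: $M(T)\mapsto\widetilde{X}(0,T)$ means $M(T)\subset\widetilde{X}(0,T)$ and there is a constant $C>0$ with $\|h\|_{\widetilde{X}(0,T)}\le C\rho_{M(T)}(h)$ for all $h\in M(T)$. *)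

theory Defs
  imports "HOL-Analysis.Analysis"
begin

definition Ioo0 :: "ereal \<Rightarrow> real set" where
  "Ioo0 T = {t. 0 < t \<and> ereal t < T}"

definition nonneg_meas :: "ereal \<Rightarrow> (real \<Rightarrow> real) \<Rightarrow> bool" where
  "nonneg_meas T f \<longleftrightarrow>
     f \<in> borel_measurable (restrict_space lebesgue (Ioo0 T)) \<and> (\<forall>t\<in>Ioo0 T. 0 \<le> f t)"

definition in_Im :: "ereal \<Rightarrow> (real \<Rightarrow> real) set \<Rightarrow> ((real \<Rightarrow> real) \<Rightarrow> real) \<Rightarrow> bool" where
  "in_Im T K \<rho> \<longleftrightarrow>
     (\<forall>h\<in>K. nonneg_meas T h \<and> 0 \<le> \<rho> h) \<and>
     (\<forall>h\<in>K. \<forall>\<alpha>::real. \<alpha> \<ge> 0 \<longrightarrow> (\<lambda>t. \<alpha> * h t) \<in> K \<and> \<rho> (\<lambda>t. \<alpha> * h t) = \<alpha> * \<rho> h) \<and>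
     (\<forall>h\<in>K. \<rho> h = 0 \<longrightarrow> (AE t in lebesgue. t \<in> Ioo0 T \<longrightarrow> h t = 0))"

text \<open>Covering M(T) \<prec> K(T); the condition C_1(\<infinity>) = 0 means C_1 = 0 when T = \<infinity>.\<close>
definition covered :: "ereal \<Rightarrow> (real \<Rightarrow> real) set \<Rightarrow> ((real \<Rightarrow> real) \<Rightarrow> real)
    \<Rightarrow> (real \<Rightarrow> real) set \<Rightarrow> ((real \<Rightarrow> real) \<Rightarrow> real) \<Rightarrow> bool" where
  "covered T M \<rho>M K \<rho>K \<longleftrightarrow>
     (\<exists>C0 C1::real. C0 > 0 \<and> C1 \<ge> 0 \<and> (T = \<infinity> \<longrightarrow> C1 = 0) \<and>
        (\<forall>h1\<in>M. \<exists>h2\<in>K. \<rho>K h2 \<le> C0 * \<rho>M h1 \<and>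
            (\<forall>t\<in>Ioo0 T. h1 t \<le> h2 t + C1 * \<rho>M h1)))"

definition equiv_cones :: "ereal \<Rightarrow> (real \<Rightarrow> real) set \<Rightarrow> ((real \<Rightarrow> real) \<Rightarrow> real)
    \<Rightarrow> (real \<Rightarrow> real) set \<Rightarrow> ((real \<Rightarrow> real) \<Rightarrow> real) \<Rightarrow> bool" where
  "equiv_cones T M \<rho>M K \<rho>K \<longleftrightarrow> covered T M \<rho>M K \<rho>K \<and> covered T K \<rho>K M \<rho>M"

text \<open>Banach function norm on (0,T) with Lebesgue measure (Bennett--Sharpley axioms P1--P5),
  defined on nonnegative measurable functions, with values in [0,\<infinity>].\<close>
definition function_norm :: "ereal \<Rightarrow> ((real \<Rightarrow> real) \<Rightarrow> ennreal) \<Rightarrow> bool" where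
  "function_norm T \<rho> \<longleftrightarrow>
     \<comment> \<open>P1\<close>
     (\<forall>f. nonneg_meas T f \<longrightarrow> (\<rho> f = 0 \<longleftrightarrow> (AE t in lebesgue. t \<in> Ioo0 T \<longrightarrow> f t = 0))) \<and>
     (\<forall>f a. nonneg_meas T f \<longrightarrow> a \<ge> 0 \<longrightarrow> \<rho> (\<lambda>t. a * f t) = ennreal a * \<rho> f) \<and>
     (\<forall>f g. nonneg_meas T f \<longrightarrow> nonneg_meas T g \<longrightarrow> \<rho> (\<lambda>t. f t + g t) \<le> \<rho> f + \<rho> g) \<and>
     \<comment> \<open>P2\<close>
     (\<forall>f g. nonneg_meas T f \<longrightarrow> nonneg_meas T g \<longrightarrow>
        (AE t in lebesgue. t \<in> Ioo0 T \<longrightarrow> g t \<le> f t) \<longrightarrow> \<rho> g \<le> \<rho> f) \<and>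
     \<comment> \<open>P3\<close>
     (\<forall>F f. (\<forall>n. nonneg_meas T (F n)) \<longrightarrow> nonneg_meas T f \<longrightarrow>
        (AE t in lebesgue. t \<in> Ioo0 T \<longrightarrow> incseq (\<lambda>n. F n t) \<and> (\<lambda>n. F n t) \<longlonglongrightarrow> f t) \<longrightarrow>
        (\<lambda>n. \<rho> (F n)) \<longlonglongrightarrow> \<rho> f) \<and>
     \<comment> \<open>P4\<close>
     (\<forall>E. E \<in> sets lebesgue \<longrightarrow> E \<subseteq> Ioo0 T \<longrightarrow> emeasure lebesgue E < \<infinity> \<longrightarrow>
        \<rho> (indicator E) < \<infinity>) \<and>
     \<comment> \<open>P5\<close>
     (\<forall>E. E \<in> sets lebesgue \<longrightarrow> E \<subseteq> Ioo0 T \<longrightarrow> emeasure lebesgue E < \<infinity> \<longrightarrow>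
        (\<exists>C::real. C \<ge> 0 \<and> (\<forall>f. nonneg_meas T f \<longrightarrow>
           (\<integral>\<^sup>+ t\<in>E. ennreal (f t) \<partial>lebesgue) \<le> ennreal C * \<rho> f)))"

definition bfs_space :: "ereal \<Rightarrow> ((real \<Rightarrow> real) \<Rightarrow> ennreal) \<Rightarrow> (real \<Rightarrow> real) set" where
  "bfs_space T \<rho> = {f. f \<in> borel_measurable (restrict_space lebesgue (Ioo0 T)) \<and> \<rho> (\<lambda>t. \<bar>f t\<bar>) < \<infinity>}"

definition bfs_norm :: "((real \<Rightarrow> real) \<Rightarrow> ennreal) \<Rightarrow> (real \<Rightarrow> real) \<Rightarrow> ennreal" where
  "bfs_norm \<rho> f = \<rho> (\<lambda>t. \<bar>f t\<bar>)"

definition embeds :: "ereal \<Rightarrow> (real \<Rightarrow> real) set \<Rightarrow> ((real \<Rightarrow> real) \<Rightarrow> real)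
    \<Rightarrow> ((real \<Rightarrow> real) \<Rightarrow> ennreal) \<Rightarrow> bool" where
  "embeds T M \<rho>M \<rho> \<longleftrightarrow> M \<subseteq> bfs_space T \<rho> \<and>
     (\<exists>C::real. C > 0 \<and> (\<forall>h\<in>M. bfs_norm \<rho> h \<le> ennreal (C * \<rho>M h)))"

end

theory Submission
  imports Defs
begin

lemma Ioo0_sets: "Ioo0 T \<in> sets lebesgue"
proof -
  have "open (Ioo0 T)"
  proof (cases T)
    case (real r)
    then have "Ioo0 T = {0<..<r}" by (auto simp: Ioo0_def)
    then show ?thesis by simp
  next
    case PInf
    then have "Ioo0 T = {0<..}" by (auto simp: Ioo0_def)
    then show ?thesis by simp
  next
    case MInf
    then have "Ioo0 T = {}" by (auto simp: Ioo0_def)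
    then show ?thesis by simp
  qed
  then show ?thesis by simp
qed

lemma Ioo0_fin: "T \<noteq> \<infinity> \<Longrightarrow> emeasure lebesgue (Ioo0 T) < \<infinity>"
proof (cases T)
  case (real r)
  then have "Ioo0 T \<subseteq> {0..r}" by (auto simp: Ioo0_def)
  then have "emeasure lebesgue (Ioo0 T) \<le> emeasure lebesgue {0..r}"
    by (intro emeasure_mono) auto
  also have "\<dots> < \<infinity>" using emeasure_lborel_Icc_eq[of 0 r] by simp
  finally show ?thesis .
next
  case MInf
  then have "Ioo0 T = {}" by (auto simp: Ioo0_def)
  then show ?thesis by simp
qed auto

lemma ind_nonneg: "nonneg_meas T (\<lambda>t. c * indicator (Ioo0 T) t)" if "c \<ge> 0"
proof -
  have "(\<lambda>t. c * indicator (Ioo0 T) t :: real) \<in> borel_measurable (restrict_space lebesgue (Ioo0 T))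
     \<longleftrightarrow> (\<lambda>t. c) \<in> borel_measurable (restrict_space lebesgue (Ioo0 T))"
    by (rule measurable_cong) (auto simp: space_restrict_space)
  then show ?thesis using that by (auto simp: nonneg_meas_def)
qed

lemma one_dir:
  assumes KI: "in_Im T K \<rho>K" and MI: "in_Im T M \<rho>M"
    and cov: "covered T M \<rho>M K \<rho>K" and fn: "function_norm T \<rho>"
    and emb: "embeds T K \<rho>K \<rho>"
  shows "embeds T M \<rho>M \<rho>"
proof -
  obtain C0 C1 where C0: "C0 > 0" and C1: "C1 \<ge> 0" and Cinf: "T = \<infinity> \<longrightarrow> C1 = 0"
    and cv: "\<forall>h1\<in>M. \<exists>h2\<in>K. \<rho>K h2 \<le> C0 * \<rho>M h1 \<and> (\<forall>t\<in>Ioo0 T. h1 t \<le> h2 t + C1 * \<rho>M h1)"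
    using cov unfolding covered_def by blast
  obtain C where C: "C > 0" and Cb: "\<forall>h\<in>K. bfs_norm \<rho> h \<le> ennreal (C * \<rho>K h)"
    using emb unfolding embeds_def by blast
  note P1a = fn[unfolded function_norm_def, THEN conjunct2, THEN conjunct1]
  note P1b = fn[unfolded function_norm_def, THEN conjunct2, THEN conjunct2, THEN conjunct1]
  note P2 = fn[unfolded function_norm_def, THEN conjunct2, THEN conjunct2, THEN conjunct2, THEN conjunct1]
  note P4 = fn[unfolded function_norm_def, THEN conjunct2, THEN conjunct2, THEN conjunct2, THEN conjunct2, THEN conjunct2, THEN conjunct1]
  define R where "R = \<rho> (indicator (Ioo0 T))"
  define r where "r = enn2real R"
  have Rr: "ennreal C1 * R = ennreal (C1 * r)"
  proof (cases "T = \<infinity>")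
    case True then show ?thesis using Cinf by simp
  next
    case False
    then have "R < \<infinity>" unfolding R_def using P4 Ioo0_sets Ioo0_fin by auto
    then show ?thesis unfolding r_def using C1
      by (simp add: ennreal_mult'' less_top)
  qed
  have r0: "r \<ge> 0" unfolding r_def by simp
  define D where "D = C * C0 + C1 * r + 1"
  have D: "D > 0" unfolding D_def using C C0 C1 r0 by (smt (verit) mult_nonneg_nonneg)
  have main: "bfs_norm \<rho> h1 \<le> ennreal (D * \<rho>M h1) \<and> h1 \<in> bfs_space T \<rho>" if h1: "h1 \<in> M" for h1
  proof -
    obtain h2 where h2: "h2 \<in> K" and b1: "\<rho>K h2 \<le> C0 * \<rho>M h1"
      and b2: "\<forall>t\<in>Ioo0 T. h1 t \<le> h2 t + C1 * \<rho>M h1" using cv h1 by blast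
    have nm1: "nonneg_meas T h1" and r1: "0 \<le> \<rho>M h1" using MI h1 unfolding in_Im_def by auto
    have nm2: "nonneg_meas T h2" and r2: "0 \<le> \<rho>K h2" using KI h2 unfolding in_Im_def by auto
    define c where "c = C1 * \<rho>M h1"
    have c0: "c \<ge> 0" unfolding c_def using C1 r1 by simp
    have abs_nm: "nonneg_meas T (\<lambda>t. \<bar>f t\<bar>)" if "nonneg_meas T f" for f
      using that unfolding nonneg_meas_def by (auto intro: borel_measurable_abs)
    have nmi: "nonneg_meas T (\<lambda>t. c * indicator (Ioo0 T) t)" using ind_nonneg[OF c0] .
    have nms: "nonneg_meas T (\<lambda>t. h2 t + c * indicator (Ioo0 T) t)"
      using nm2 nmi unfolding nonneg_meas_def by (auto intro!: borel_measurable_add)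
    have "\<rho> (\<lambda>t. \<bar>h1 t\<bar>) \<le> \<rho> (\<lambda>t. h2 t + c * indicator (Ioo0 T) t)"
      apply (rule P2[rule_format, OF nms abs_nm[OF nm1]])
      using b2 nm1 unfolding nonneg_meas_def c_def by auto
    also have "\<dots> \<le> \<rho> h2 + \<rho> (\<lambda>t. c * indicator (Ioo0 T) t)"
      using P1b nm2 nmi by blast
    also have "\<rho> (\<lambda>t. c * indicator (Ioo0 T) t) = ennreal c * R"
      unfolding R_def
      using P1a[rule_format, of "indicator (Ioo0 T)" c] ind_nonneg[of 1 T] c0 by simp
    also have "ennreal c * R = ennreal (\<rho>M h1) * ennreal (C1 * r)"
      unfolding c_def Rr[symmetric] using C1 r1
      by (simp add: ennreal_mult' mult.commute mult.left_commute)
    also have "\<dots> = ennreal (C1 * r * \<rho>M h1)"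
      using r1 by (simp add: ennreal_mult'[symmetric] mult.commute)
    also have "\<rho> h2 \<le> \<rho> (\<lambda>t. \<bar>h2 t\<bar>)"
      apply (rule P2[rule_format, OF abs_nm[OF nm2] nm2]) by auto
    also have "\<dots> \<le> ennreal (C * \<rho>K h2)" using Cb h2 unfolding bfs_norm_def by blast
    also have "\<dots> \<le> ennreal (C * C0 * \<rho>M h1)"
      using b1 C by (intro ennreal_leI) (simp add: mult.assoc)
    finally have "\<rho> (\<lambda>t. \<bar>h1 t\<bar>) \<le> ennreal (C * C0 * \<rho>M h1) + ennreal (C1 * r * \<rho>M h1)"
      by (simp add: add_right_mono)
    also have "\<dots> = ennreal (C * C0 * \<rho>M h1 + C1 * r * \<rho>M h1)"
      using C C0 C1 r0 r1 by (simp add: ennreal_plus)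
    also have "\<dots> \<le> ennreal (D * \<rho>M h1)"
      unfolding D_def using r1 by (intro ennreal_leI) (simp add: algebra_simps)
    finally have fin: "\<rho> (\<lambda>t. \<bar>h1 t\<bar>) \<le> ennreal (D * \<rho>M h1)" .
    then have "\<rho> (\<lambda>t. \<bar>h1 t\<bar>) < \<infinity>" using order.strict_trans1[OF fin ennreal_less_top[of "D * \<rho>M h1"]] by simp
    then show ?thesis using fin nm1 unfolding bfs_norm_def bfs_space_def nonneg_meas_def by auto
  qed
  show ?thesis unfolding embeds_def using main D by blast
qed

theorem corollary4p1:
  fixes T :: ereal
    and K M :: "(real \<Rightarrow> real) set"
    and \<rho>K \<rho>M :: "(real \<Rightarrow> real) \<Rightarrow> real"
  assumes "0 < T"
    and "in_Im T K \<rho>K" and "in_Im T M \<rho>M"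
    and "equiv_cones T M \<rho>M K \<rho>K"
  shows "\<forall>\<rho>::(real \<Rightarrow> real) \<Rightarrow> ennreal. function_norm T \<rho> \<longrightarrow>
           (embeds T K \<rho>K \<rho> \<longleftrightarrow> embeds T M \<rho>M \<rho>)"
  using one_dir[OF assms(2,3)] one_dir[OF assms(3,2)] assms(4)
  unfolding equiv_cones_def by blast

end
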